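(* Let $d\ge 1$, let $\Omega=\operatorname{diag}(\omega_j)_{j=1}^d\in\mathbb{R}^{d\times d}$ with $\omega_j> 0$ for all $j$, let $\omega=\min_j\omega_j$, and let $A\in\mathbb{C}^{d\times d}$ be self-adjoint. Let $0<h\le 1$ and let $\psi_1,\phi\colon\mathbb{R}\to\mathbb{R}$ be even functions such that $\psi_1(\xi)=\operatorname{sinc}(\xi)\phi(\xi)$ for all $\xi\in\mathbb{R}$ and, for constants $c_0,c_1\ge 0$, \[ |\psi_1(\xi)|\le c_0,\qquad |\phi(\xi)|\le c_0,\qquad |\phi(\xi)-1|\le c_1|\xi|\qquad\text{for all }\xi\in\mathbb{R}. \] Assume $\omega\ge \tfrac12 c_0^2\|A\|+1$. Set $\Psi_1=\psi_1(h\Omega)$, $\Phi=\phi(h\Omega)$. For given $q_0,\dot q_0\in\mathbb{C}^d$, define $(q_n,\dot q_n)_{n\ge 0}$ recursively by \begin{align*} q_{n+1} &= \cos(h\Omega) q_n + h\operatorname{sinc}(h\Omega) \dot{q}_n - \tfrac12 h^2 \operatorname{sinc}(h\Omega) \Psi_1 A\Phi q_n,\\ \dot{q}_{n+1} &= -\Omega \sin(h\Omega) q_n + \cos(h\Omega) \dot{q}_n - \tfrac12 h \big( \cos(h\Omega) \Psi_1 A\Phi q_n + \Psi_1 A\Phi q_{n+1}\big). \end{align*} Then $\|q_n\|\le C$ for all $n$, with a constant $C$ depending only on $c_0$, $\|A\|$, $\|q_0\|$, $\|\Omega q_0\|$ and $\|\dot q_0\|$.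
   Context: $\|\cdot\|$ is the Euclidean norm on $\mathbb{C}^d$ and, for matrices, the induced operator norm. $\operatorname{sinc}(\xi)=\sin(\xi)/\xi$ for $\xi\ne0$ and $\operatorname{sinc}(0)=1$. For a function $f\colon\mathbb{R}\to\mathbb{R}$, $f(h\Omega)$ denotes the diagonal matrix $\operatorname{diag}(f(h\omega_j))_{j=1}^d$. *)

theory Defs
  imports "HOL-Analysis.Analysis"
begin

text \<open>Vectors in C^d are represented as functions nat => complex (only indices < d matter),
  d x d matrices as functions nat => nat => complex.\<close>

definition sinc :: "real \<Rightarrow> real" where
  "sinc \<xi> = (if \<xi> = 0 then 1 else sin \<xi> / \<xi>)"

definition vnorm :: "nat \<Rightarrow> (nat \<Rightarrow> complex) \<Rightarrow> real" where
  "vnorm d x = sqrt (\<Sum>j<d. (cmod (x j))\<^sup>2)"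

definition mv :: "nat \<Rightarrow> (nat \<Rightarrow> nat \<Rightarrow> complex) \<Rightarrow> (nat \<Rightarrow> complex) \<Rightarrow> (nat \<Rightarrow> complex)" where
  "mv d M x = (\<lambda>i. \<Sum>j<d. M i j * x j)"

definition opnorm :: "nat \<Rightarrow> (nat \<Rightarrow> nat \<Rightarrow> complex) \<Rightarrow> real" where
  "opnorm d M = Sup {vnorm d (mv d M x) | x. vnorm d x \<le> 1}"

definition self_adjoint :: "nat \<Rightarrow> (nat \<Rightarrow> nat \<Rightarrow> complex) \<Rightarrow> bool" where
  "self_adjoint d M \<longleftrightarrow> (\<forall>i<d. \<forall>j<d. M i j = cnj (M j i))"

text \<open>f(h Omega) applied to a vector: componentwise multiplication by f(h omega_j).\<close>
definition dgm :: "(real \<Rightarrow> real) \<Rightarrow> real \<Rightarrow> (nat \<Rightarrow> real) \<Rightarrow> (nat \<Rightarrow> complex) \<Rightarrow> (nat \<Rightarrow> complex)" where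
  "dgm f h \<omega> x = (\<lambda>j. complex_of_real (f (h * \<omega> j)) * x j)"

end

theory Submission
  imports Defs
begin


lemma vnorm_L2: "vnorm d x = L2_set (\<lambda>j. cmod (x j)) {..<d}"
  unfolding vnorm_def L2_set_def by simp

lemma vnorm_nonneg: "0 \<le> vnorm d x"
  by (simp add: vnorm_L2)

lemma vnorm_sq: "(vnorm d x)\<^sup>2 = (\<Sum>j<d. (cmod (x j))\<^sup>2)"
  unfolding vnorm_def by (simp add: sum_nonneg)

lemma vnorm_add: "vnorm d (\<lambda>j. x j + y j) \<le> vnorm d x + vnorm d y"
proof -
  have "vnorm d (\<lambda>j. x j + y j) \<le> L2_set (\<lambda>j. cmod (x j) + cmod (y j)) {..<d}"
    unfolding vnorm_L2 by (rule L2_set_mono) (auto simp: norm_triangle_ineq)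
  also have "\<dots> \<le> vnorm d x + vnorm d y"
    unfolding vnorm_L2 by (rule L2_set_triangle_ineq)
  finally show ?thesis .
qed

lemma vnorm_diff: "vnorm d (\<lambda>j. x j - y j) \<le> vnorm d x + vnorm d y"
proof -
  have "vnorm d (\<lambda>j. x j - y j) = vnorm d (\<lambda>j. x j + (- y j))" by simp
  also have "\<dots> \<le> vnorm d x + vnorm d (\<lambda>j. - y j)" by (rule vnorm_add)
  also have "vnorm d (\<lambda>j. - y j) = vnorm d y" unfolding vnorm_def by simp
  finally show ?thesis .
qed

lemma vnorm_scale:
  assumes "\<And>j. j < d \<Longrightarrow> cmod (f j) \<le> c" "0 \<le> c"
  shows "vnorm d (\<lambda>j. f j * x j) \<le> c * vnorm d x"
proof -
  have "vnorm d (\<lambda>j. f j * x j) \<le> L2_set (\<lambda>j. c * cmod (x j)) {..<d}"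
    unfolding vnorm_L2 using assms by (intro L2_set_mono) (auto simp: norm_mult mult_right_mono)
  also have "\<dots> = c * vnorm d x"
    unfolding vnorm_L2 using assms by (simp add: L2_set_right_distrib)
  finally show ?thesis .
qed

lemma vnorm_cs: "cmod (\<Sum>j<d. x j * cnj (y j)) \<le> vnorm d x * vnorm d y"
proof -
  have "cmod (\<Sum>j<d. x j * cnj (y j)) \<le> (\<Sum>j<d. cmod (x j * cnj (y j)))"
    by (rule norm_sum)
  also have "\<dots> = (\<Sum>j<d. \<bar>cmod (x j)\<bar> * \<bar>cmod (y j)\<bar>)"
    by (simp add: norm_mult)
  also have "\<dots> \<le> vnorm d x * vnorm d y"
    unfolding vnorm_L2 by (rule L2_set_mult_ineq)
  finally show ?thesis .
qed

lemma vnorm_zero: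
  assumes "vnorm d x = 0" "j < d" shows "x j = 0"
  using assms unfolding vnorm_L2 by (simp add: L2_set_eq_0_iff)

lemma vnorm_comp_le: "j < d \<Longrightarrow> cmod (x j) \<le> vnorm d x"
  unfolding vnorm_L2 by (rule member_le_L2_set) auto

lemma opnorm_bdd: "bdd_above {vnorm d (mv d M x) | x. vnorm d x \<le> 1}"
proof (rule bdd_aboveI)
  fix y assume "y \<in> {vnorm d (mv d M x) | x. vnorm d x \<le> 1}"
  then obtain x where y: "y = vnorm d (mv d M x)" and x: "vnorm d x \<le> 1" by auto
  have "y \<le> (\<Sum>i<d. cmod (mv d M x i))"
    unfolding y vnorm_L2 by (rule order_trans[OF L2_set_le_sum_abs]) simp
  also have "\<dots> \<le> (\<Sum>i<d. \<Sum>j<d. cmod (M i j))"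
  proof (rule sum_mono)
    fix i assume "i \<in> {..<d}"
    have "cmod (mv d M x i) \<le> (\<Sum>j<d. cmod (M i j * x j))"
      unfolding mv_def by (rule norm_sum)
    also have "\<dots> \<le> (\<Sum>j<d. cmod (M i j))"
    proof (rule sum_mono)
      fix j assume "j \<in> {..<d}"
      then have "cmod (x j) \<le> 1" using vnorm_comp_le[of j d x] x by auto
      then show "cmod (M i j * x j) \<le> cmod (M i j)"
        by (simp add: norm_mult mult_left_le)
    qed
    finally show "cmod (mv d M x i) \<le> (\<Sum>j<d. cmod (M i j))" .
  qed
  finally show "y \<le> (\<Sum>i<d. \<Sum>j<d. cmod (M i j))" .
qed

lemma opnorm_nonneg: "0 \<le> opnorm d M"
proof -
  have "vnorm d (mv d M (\<lambda>_. 0)) \<le> opnorm d M"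
    unfolding opnorm_def by (rule cSup_upper[OF _ opnorm_bdd]) (auto simp: vnorm_def)
  moreover have "0 \<le> vnorm d (mv d M (\<lambda>_. 0))" by (rule vnorm_nonneg)
  ultimately show ?thesis by linarith
qed

lemma mv_bound: "vnorm d (mv d M x) \<le> opnorm d M * vnorm d x"
proof (cases "vnorm d x = 0")
  case True
  then have "mv d M x = (\<lambda>i. 0)" unfolding mv_def using vnorm_zero[OF True] by auto
  then show ?thesis using True by (simp add: vnorm_def)
next
  case False
  define t where "t = vnorm d x"
  have t: "t > 0" using False vnorm_nonneg[of d x] unfolding t_def by linarith
  define y where "y = (\<lambda>j. complex_of_real (1/t) * x j)"
  have vy: "vnorm d y \<le> (1/t) * t"
    unfolding y_def t_def by (rule vnorm_scale) (use t t_def in \<open>auto simp: norm_divide\<close>)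
  then have vy1: "vnorm d y \<le> 1" using t by simp
  have "mv d M y = (\<lambda>i. complex_of_real (1/t) * mv d M x i)"
    unfolding y_def mv_def by (auto simp: sum_distrib_left algebra_simps)
  then have "vnorm d (mv d M y) = (1/t) * vnorm d (mv d M x)"
  proof -
    have "vnorm d (mv d M y) = L2_set (\<lambda>j. (1/t) * cmod (mv d M x j)) {..<d}"
      unfolding vnorm_L2 \<open>mv d M y = _\<close> using t by (intro L2_set_cong) (auto simp: norm_divide)
    also have "\<dots> = (1/t) * vnorm d (mv d M x)"
      unfolding vnorm_L2 using t using L2_set_right_distrib[of "1/t" "\<lambda>j. cmod (mv d M x j)" "{..<d}"] by simp
    finally show ?thesis .
  qed
  moreover have "vnorm d (mv d M y) \<le> opnorm d M"
    unfolding opnorm_def by (rule cSup_upper[OF _ opnorm_bdd]) (use vy1 in auto)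
  ultimately have "(1/t) * vnorm d (mv d M x) \<le> opnorm d M" by simp
  then show ?thesis using t unfolding t_def[symmetric] by (simp add: field_simps)
qed


lemma comp_id:
  fixes q q1 p u u1 v :: complex and c sc si w h :: real
  assumes "q1 = of_real c * q + of_real (h * sc) * u" "p = - of_real (w * si) * q + of_real c * u"
    "u1 = p - of_real (h * sc) * v" "c\<^sup>2 + si\<^sup>2 = 1" "h * sc * w = si"
  shows "(cmod u1)\<^sup>2 + w\<^sup>2 * (cmod q1)\<^sup>2 + Re((of_real c * q1 + of_real (h * sc) * u1)  *  cnj v)
       = (cmod u)\<^sup>2 + w\<^sup>2 * (cmod q)\<^sup>2 + Re(q  *  cnj v)"
  unfolding assms(3) cmod_power2 using assms(4,5)
  apply (simp add: assms(1,2) power2_eq_square algebra_simps)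
  by algebra


definition Bop :: "nat \<Rightarrow> (nat \<Rightarrow> nat \<Rightarrow> complex) \<Rightarrow> (real \<Rightarrow> real) \<Rightarrow> real \<Rightarrow> (nat \<Rightarrow> real) \<Rightarrow> (nat \<Rightarrow> complex) \<Rightarrow> (nat \<Rightarrow> complex)" where
  "Bop d A f h w x = dgm f h w (mv d A (dgm f h w x))"

lemma herm:
  assumes "self_adjoint d A"
  shows "(\<Sum>j<d. x j * cnj (Bop d A f h w y j)) = cnj (\<Sum>j<d. y j * cnj (Bop d A f h w x j))"
proof -
  have sa: "\<And>j k. j < d \<Longrightarrow> k < d \<Longrightarrow> A k j = cnj (A j k)"
    using assms unfolding self_adjoint_def by blast
  have "(\<Sum>j<d. x j * cnj (Bop d A f h w y j))
      = (\<Sum>j<d. \<Sum>k<d. x j * cnj (A j k) * of_real (f (h * w j)) * of_real (f (h * w k)) * cnj (y k))"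
    unfolding Bop_def dgm_def mv_def cnj_sum sum_distrib_left by (intro sum.cong refl) (simp add: mult_ac)
  also have "\<dots> = (\<Sum>k<d. \<Sum>j<d. x j * cnj (A j k) * of_real (f (h * w j)) * of_real (f (h * w k)) * cnj (y k))"
    by (rule sum.swap)
  also have "\<dots> = (\<Sum>k<d. \<Sum>j<d. x j * A k j * of_real (f (h * w j)) * of_real (f (h * w k)) * cnj (y k))"
    using sa by (intro sum.cong refl) (simp add: sa[symmetric])
  also have "\<dots> = cnj (\<Sum>j<d. y j * cnj (Bop d A f h w x j))"
    unfolding Bop_def dgm_def mv_def cnj_sum sum_distrib_left by (intro sum.cong refl) (simp add: mult_ac)
  finally show ?thesis .
qed

lemma sinc_abs: "\<bar>sinc x\<bar> \<le> 1"
  unfolding sinc_def using abs_sin_x_le_abs_x[of x]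
  by (auto simp: abs_divide divide_le_eq_1)

lemma sinc_mult: "x \<noteq> 0 \<Longrightarrow> x * sinc x = sin x"
  unfolding sinc_def by simp

lemma vnorm_dgm:
  assumes "\<And>j. j < d \<Longrightarrow> \<bar>f (h * w j)\<bar> \<le> c" "0 \<le> c"
  shows "vnorm d (dgm f h w x) \<le> c * vnorm d x"
  unfolding dgm_def by (rule vnorm_scale) (use assms in auto)

lemma Bop_bound:
  assumes "\<And>\<xi>. \<bar>f \<xi>\<bar> \<le> c" "0 \<le> c"
  shows "vnorm d (Bop d A f h w x) \<le> c\<^sup>2 * opnorm d A * vnorm d x"
proof -
  have "vnorm d (Bop d A f h w x) \<le> c * vnorm d (mv d A (dgm f h w x))"
    unfolding Bop_def by (rule vnorm_dgm) (use assms in auto)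
  also have "\<dots> \<le> c * (opnorm d A * vnorm d (dgm f h w x))"
    by (rule mult_left_mono[OF mv_bound assms(2)])
  also have "\<dots> \<le> c * (opnorm d A * (c * vnorm d x))"
    using assms opnorm_nonneg vnorm_dgm by (intro mult_left_mono) auto
  finally show ?thesis by (simp add: power2_eq_square mult_ac)
qed



definition Cb :: "real \<Rightarrow> real \<Rightarrow> real \<Rightarrow> real \<Rightarrow> real \<Rightarrow> real" where
  "Cb c0 nA nq nwq np = sqrt ((np + c0\<^sup>2 * nA * nq / 2)\<^sup>2 + nwq\<^sup>2
      + (nq + (np + c0\<^sup>2 * nA * nq / 2)) * (c0\<^sup>2 * nA) * nq)"

lemma main:
  fixes d :: nat and w :: "nat \<Rightarrow> real" and A :: "nat \<Rightarrow> nat \<Rightarrow> complex" and h :: real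
    and psi phi :: "real \<Rightarrow> real" and c0 c1 :: real and q qd :: "nat \<Rightarrow> nat \<Rightarrow> complex"
  assumes d: "d \<ge> 1" and wpos: "\<forall>j<d. w j > 0" and sa: "self_adjoint d A" and h0: "0 < h" and h1: "h \<le> 1"
    and psi: "\<forall>\<xi>. psi \<xi> = sinc \<xi> * phi \<xi>" and c0: "c0 \<ge> 0"
    and bnd: "\<forall>\<xi>. \<bar>psi \<xi>\<bar> \<le> c0 \<and> \<bar>phi \<xi>\<bar> \<le> c0 \<and> \<bar>phi \<xi> - 1\<bar> \<le> c1 * \<bar>\<xi>\<bar>"
    and wmin: "Min (w ` {..<d}) \<ge> c0\<^sup>2 * opnorm d A / 2 + 1"
    and recq: "\<forall>n. q (Suc n) =
             (\<lambda>j. dgm cos h w (q n) j + complex_of_real h * dgm sinc h w (qd n) j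
                 - complex_of_real (h\<^sup>2 / 2) *
                     dgm sinc h w (dgm psi h w (mv d A (dgm phi h w (q n)))) j)"
    and recp: "\<forall>n. qd (Suc n) =
             (\<lambda>j. - complex_of_real (w j) * dgm sin h w (q n) j + dgm cos h w (qd n) j
                 - complex_of_real (h / 2) *
                     (dgm cos h w (dgm psi h w (mv d A (dgm phi h w (q n)))) j
                      + dgm psi h w (mv d A (dgm phi h w (q (Suc n)))) j))"
  shows "vnorm d (q n) \<le> Cb c0 (opnorm d A) (vnorm d (q 0))
               (vnorm d (\<lambda>j. complex_of_real (w j) * q 0 j)) (vnorm d (qd 0))"
proof -
  define B where "B = Bop d A phi h w"
  define sc where "sc = (\<lambda>j. sinc (h * w j))"
  define co where "co = (\<lambda>j. cos (h * w j))"
  define si where "si = (\<lambda>j. sin (h * w j))"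
  define a where "a = c0\<^sup>2 * opnorm d A"
  have a0: "0 \<le> a" unfolding a_def using opnorm_nonneg by simp
  have K: "dgm psi h w (mv d A (dgm phi h w x)) = (\<lambda>j. of_real (sc j) * B x j)" for x
    unfolding B_def Bop_def dgm_def sc_def using psi by (simp add: fun_eq_iff)
  note recq' = recq[unfolded K] and recp' = recp[unfolded K]
  define r where "r = (\<lambda>n j. qd n j - of_real (h / 2 * sc j) * B (q n) j)"
  have Q: "q (Suc n) j = of_real (co j) * q n j + of_real (h * sc j) * r n j" for n j
    using recq' unfolding r_def co_def sc_def
    by (simp add: dgm_def algebra_simps power2_eq_square)
  have R: "r (Suc n) j = - of_real (w j * si j) * q n j + of_real (co j) * r n j
      - of_real (h * sc j) * B (q (Suc n)) j" for n j
    using recp' unfolding r_def co_def sc_def si_def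
    by (simp add: dgm_def algebra_simps)
  define E where "E = (\<lambda>n. (\<Sum>j<d. (cmod (r n j))\<^sup>2 + (w j)\<^sup>2 * (cmod (q n j))\<^sup>2)
       + Re (\<Sum>j<d. q (Suc n) j * cnj (B (q n) j)))"
  have cons: "E (Suc n) = E n" for n
  proof -
    have comp: "(cmod (r (Suc n) j))\<^sup>2 + (w j)\<^sup>2 * (cmod (q (Suc n) j))\<^sup>2
        + Re (q (Suc (Suc n)) j * cnj (B (q (Suc n)) j))
      = (cmod (r n j))\<^sup>2 + (w j)\<^sup>2 * (cmod (q n j))\<^sup>2 + Re (q n j * cnj (B (q (Suc n)) j))"
      if j: "j < d" for j
    proof -
      have wj: "w j > 0" using wpos j by auto
      have "h * w j \<noteq> 0" using wj h0 by simp
      then have hs: "h * sc j * w j = si j" unfolding sc_def si_def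
        using sinc_mult[of "h * w j"] by (simp add: mult_ac)
      have cs: "(co j)\<^sup>2 + (si j)\<^sup>2 = 1" unfolding co_def si_def by simp
      show ?thesis
        unfolding Q[of "Suc n" j]
        by (rule comp_id[OF Q[of n j] refl R[of n j] cs hs])
    qed
    have "E (Suc n) = (\<Sum>j<d. (cmod (r (Suc n) j))\<^sup>2 + (w j)\<^sup>2 * (cmod (q (Suc n) j))\<^sup>2
        + Re (q (Suc (Suc n)) j * cnj (B (q (Suc n)) j)))"
      unfolding E_def by (simp add: sum.distrib)
    also have "\<dots> = (\<Sum>j<d. (cmod (r n j))\<^sup>2 + (w j)\<^sup>2 * (cmod (q n j))\<^sup>2
        + Re (q n j * cnj (B (q (Suc n)) j)))"
      by (intro sum.cong refl) (rule comp, simp)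
    also have "\<dots> = (\<Sum>j<d. (cmod (r n j))\<^sup>2 + (w j)\<^sup>2 * (cmod (q n j))\<^sup>2)
        + Re (\<Sum>j<d. q n j * cnj (B (q (Suc n)) j))"
      by (simp add: sum.distrib)
    also have "(\<Sum>j<d. q n j * cnj (B (q (Suc n)) j)) = cnj (\<Sum>j<d. q (Suc n) j * cnj (B (q n) j))"
      unfolding B_def by (rule herm[OF sa])
    finally show ?thesis unfolding E_def by simp
  qed
  have Econst: "E n = E 0" for n
    by (induction n) (auto simp: cons)
  have Bb: "vnorm d (B x) \<le> a * vnorm d x" for x
    unfolding B_def a_def by (rule Bop_bound) (use bnd c0 in auto)
  have scb: "cmod (of_real (h * sc j)) \<le> 1" for j
  proof -
    have "\<bar>sc j\<bar> \<le> 1" unfolding sc_def by (rule sinc_abs)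
    then have "\<bar>h\<bar> * \<bar>sc j\<bar> \<le> 1 * 1" using h0 h1 by (intro mult_mono) auto
    then show ?thesis by (simp add: abs_mult norm_mult)
  qed
  have scb2: "cmod (of_real (h / 2 * sc j)) \<le> 1/2" for j
    using scb[of j] by (simp add: abs_mult)
  have cob: "cmod (of_real (co j)) \<le> 1" "\<bar>co j\<bar> \<le> 1" for j unfolding co_def by simp_all
  have scb': "cmod (complex_of_real h * complex_of_real (sc j)) \<le> 1" for j using scb[of j] by simp
  have scb2': "cmod (complex_of_real h * complex_of_real (sc j) / 2) \<le> 1/2" for j using scb2[of j] by simp
  define wm where "wm = Min (w ` {..<d})"
  have wmj: "wm \<le> w j" if "j < d" for j unfolding wm_def using that by (intro Min_le) auto
  have wm1: "wm \<ge> a / 2 + 1" using wmin unfolding wm_def a_def by simp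
  have qS: "q (Suc n) = (\<lambda>j. of_real (co j) * q n j + of_real (h * sc j) * r n j)" for n
    using Q by (simp add: fun_eq_iff)
  have low: "(vnorm d (q n))\<^sup>2 \<le> E n" for n
  proof -
    define x where "x = vnorm d (q n)"
    define y where "y = vnorm d (r n)"
    have x0: "0 \<le> x" "0 \<le> y" unfolding x_def y_def by (auto simp: vnorm_nonneg)
    have "vnorm d (q (Suc n)) \<le> vnorm d (\<lambda>j. of_real (co j) * q n j) + vnorm d (\<lambda>j. of_real (h * sc j) * r n j)"
      unfolding qS by (rule vnorm_add)
    also have "\<dots> \<le> 1 * x + 1 * y"
      unfolding x_def y_def by (intro add_mono vnorm_scale) (auto simp: cob scb scb')
    finally have h1: "vnorm d (q (Suc n)) \<le> x + y" by simp
    have "\<bar>Re (\<Sum>j<d. q (Suc n) j * cnj (B (q n) j))\<bar> \<le> cmod (\<Sum>j<d. q (Suc n) j * cnj (B (q n) j))"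
      by (rule abs_Re_le_cmod)
    also have "\<dots> \<le> vnorm d (q (Suc n)) * vnorm d (B (q n))" by (rule vnorm_cs)
    also have "\<dots> \<le> (x + y) * (a * x)"
      using h1 Bb[of "q n"] x0 unfolding x_def by (intro mult_mono) (auto simp: vnorm_nonneg a0)
    finally have h2: "\<bar>Re (\<Sum>j<d. q (Suc n) j * cnj (B (q n) j))\<bar> \<le> (x + y) * (a * x)" .
    have "(\<Sum>j<d. (cmod (r n j))\<^sup>2 + (w j)\<^sup>2 * (cmod (q n j))\<^sup>2)
        = y\<^sup>2 + (\<Sum>j<d. (w j)\<^sup>2 * (cmod (q n j))\<^sup>2)"
      unfolding y_def vnorm_sq by (simp add: sum.distrib)
    moreover have "(\<Sum>j<d. (w j)\<^sup>2 * (cmod (q n j))\<^sup>2) \<ge> (\<Sum>j<d. wm\<^sup>2 * (cmod (q n j))\<^sup>2)"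
    proof (rule sum_mono)
      fix j assume "j \<in> {..<d}"
      then have "wm \<le> w j" "0 \<le> wm" using wmj wm1 a0 by auto
      then show "wm\<^sup>2 * (cmod (q n j))\<^sup>2 \<le> (w j)\<^sup>2 * (cmod (q n j))\<^sup>2"
        by (intro mult_right_mono power_mono) auto
    qed
    moreover have "(\<Sum>j<d. wm\<^sup>2 * (cmod (q n j))\<^sup>2) = wm\<^sup>2 * x\<^sup>2"
      unfolding x_def vnorm_sq by (simp add: sum_distrib_left)
    ultimately have h3: "(\<Sum>j<d. (cmod (r n j))\<^sup>2 + (w j)\<^sup>2 * (cmod (q n j))\<^sup>2) \<ge> y\<^sup>2 + wm\<^sup>2 * x\<^sup>2"
      by linarith
    have "wm\<^sup>2 \<ge> (a / 2 + 1)\<^sup>2" using wm1 a0 by (intro power_mono) auto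
    then have h4: "wm\<^sup>2 * x\<^sup>2 \<ge> (a / 2 + 1)\<^sup>2 * x\<^sup>2" by (intro mult_right_mono) auto
    have h5: "(y - a * x / 2)\<^sup>2 \<ge> 0" by simp
    have "E n \<ge> y\<^sup>2 + wm\<^sup>2 * x\<^sup>2 - (x + y) * (a * x)"
      unfolding E_def using h2 h3 by linarith
    moreover have "y\<^sup>2 + (a / 2 + 1)\<^sup>2 * x\<^sup>2 - (x + y) * (a * x) - x\<^sup>2 = (y - a * x / 2)\<^sup>2"
      by (simp add: power2_eq_square algebra_simps)
    ultimately show ?thesis unfolding x_def[symmetric] using h4 h5 by linarith
  qed
  define x0 where "x0 = vnorm d (q 0)"
  define y0 where "y0 = vnorm d (r 0)"
  define wq where "wq = vnorm d (\<lambda>j. complex_of_real (w j) * q 0 j)"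
  define p0 where "p0 = vnorm d (qd 0)"
  define Rr where "Rr = p0 + a * x0 / 2"
  have nn: "0 \<le> x0" "0 \<le> y0" "0 \<le> wq" "0 \<le> p0" unfolding x0_def y0_def wq_def p0_def
    by (auto simp: vnorm_nonneg)
  have "y0 \<le> p0 + vnorm d (\<lambda>j. of_real (h / 2 * sc j) * B (q 0) j)"
    unfolding y0_def p0_def r_def by (rule vnorm_diff)
  also have "vnorm d (\<lambda>j. of_real (h / 2 * sc j) * B (q 0) j) \<le> 1/2 * vnorm d (B (q 0))"
    by (rule vnorm_scale) (auto simp: scb2 scb2' scb')
  also have "\<dots> \<le> 1/2 * (a * x0)" using Bb[of "q 0"] unfolding x0_def by simp
  finally have y0R: "y0 \<le> Rr" unfolding Rr_def by simp
  have "vnorm d (q (Suc 0)) \<le> vnorm d (\<lambda>j. of_real (co j) * q 0 j) + vnorm d (\<lambda>j. of_real (h * sc j) * r 0 j)"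
    unfolding qS by (rule vnorm_add)
  also have "\<dots> \<le> 1 * x0 + 1 * y0"
    unfolding x0_def y0_def by (intro add_mono vnorm_scale) (auto simp: cob scb scb')
  finally have q1: "vnorm d (q (Suc 0)) \<le> x0 + y0" by simp
  have "Re (\<Sum>j<d. q (Suc 0) j * cnj (B (q 0) j)) \<le> cmod (\<Sum>j<d. q (Suc 0) j * cnj (B (q 0) j))"
    by (rule complex_Re_le_cmod)
  also have "\<dots> \<le> vnorm d (q (Suc 0)) * vnorm d (B (q 0))" by (rule vnorm_cs)
  also have "\<dots> \<le> (x0 + y0) * (a * x0)"
    using q1 Bb[of "q 0"] nn unfolding x0_def by (intro mult_mono) (auto simp: vnorm_nonneg a0)
  also have "\<dots> \<le> (x0 + Rr) * (a * x0)"
    using y0R nn a0 by (intro mult_right_mono) auto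
  finally have u1: "Re (\<Sum>j<d. q (Suc 0) j * cnj (B (q 0) j)) \<le> (x0 + Rr) * (a * x0)" .
  have u2: "(\<Sum>j<d. (cmod (r 0 j))\<^sup>2 + (w j)\<^sup>2 * (cmod (q 0 j))\<^sup>2) = y0\<^sup>2 + wq\<^sup>2"
    unfolding y0_def wq_def vnorm_sq by (simp add: sum.distrib norm_mult power_mult_distrib)
  have u3: "y0\<^sup>2 \<le> Rr\<^sup>2" using y0R nn by (intro power_mono) auto
  have E0: "E 0 \<le> Rr\<^sup>2 + wq\<^sup>2 + (x0 + Rr) * a * x0"
    unfolding E_def using u1 u2 u3 by (simp add: mult_ac)
  have "(vnorm d (q n))\<^sup>2 \<le> Rr\<^sup>2 + wq\<^sup>2 + (x0 + Rr) * a * x0"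
    using low[of n] Econst[of n] E0 by linarith
  then have "vnorm d (q n) \<le> sqrt (Rr\<^sup>2 + wq\<^sup>2 + (x0 + Rr) * a * x0)"
    using vnorm_nonneg[of d "q n"] real_le_rsqrt by blast
  then show ?thesis unfolding Cb_def Rr_def a_def x0_def wq_def p0_def by simp
qed


theorem lemma5:
  shows "\<exists>C :: real \<Rightarrow> real \<Rightarrow> real \<Rightarrow> real \<Rightarrow> real \<Rightarrow> real.
    \<forall>(d::nat) (\<omega>::nat \<Rightarrow> real) (A::nat \<Rightarrow> nat \<Rightarrow> complex) (h::real)
      (\<psi>\<^sub>1::real \<Rightarrow> real) (\<phi>::real \<Rightarrow> real) (c\<^sub>0::real) (c\<^sub>1::real)
      (q::nat \<Rightarrow> nat \<Rightarrow> complex) (qd::nat \<Rightarrow> nat \<Rightarrow> complex).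
      d \<ge> 1 \<and> (\<forall>j<d. \<omega> j > 0) \<and> self_adjoint d A \<and> 0 < h \<and> h \<le> 1
      \<and> (\<forall>\<xi>. \<psi>\<^sub>1 (-\<xi>) = \<psi>\<^sub>1 \<xi>) \<and> (\<forall>\<xi>. \<phi> (-\<xi>) = \<phi> \<xi>)
      \<and> (\<forall>\<xi>. \<psi>\<^sub>1 \<xi> = sinc \<xi> * \<phi> \<xi>)
      \<and> c\<^sub>0 \<ge> 0 \<and> c\<^sub>1 \<ge> 0
      \<and> (\<forall>\<xi>. \<bar>\<psi>\<^sub>1 \<xi>\<bar> \<le> c\<^sub>0 \<and> \<bar>\<phi> \<xi>\<bar> \<le> c\<^sub>0 \<and> \<bar>\<phi> \<xi> - 1\<bar> \<le> c\<^sub>1 * \<bar>\<xi>\<bar>)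
      \<and> Min (\<omega> ` {..<d}) \<ge> c\<^sub>0\<^sup>2 * opnorm d A / 2 + 1
      \<and> (\<forall>n. q (Suc n) =
             (\<lambda>j. dgm cos h \<omega> (q n) j + complex_of_real h * dgm sinc h \<omega> (qd n) j
                 - complex_of_real (h\<^sup>2 / 2) *
                     dgm sinc h \<omega> (dgm \<psi>\<^sub>1 h \<omega> (mv d A (dgm \<phi> h \<omega> (q n)))) j))
      \<and> (\<forall>n. qd (Suc n) =
             (\<lambda>j. - complex_of_real (\<omega> j) * dgm sin h \<omega> (q n) j + dgm cos h \<omega> (qd n) j
                 - complex_of_real (h / 2) *
                     (dgm cos h \<omega> (dgm \<psi>\<^sub>1 h \<omega> (mv d A (dgm \<phi> h \<omega> (q n)))) j
                      + dgm \<psi>\<^sub>1 h \<omega> (mv d A (dgm \<phi> h \<omega> (q (Suc n)))) j)))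
      \<longrightarrow> (\<forall>n. vnorm d (q n) \<le>
             C c\<^sub>0 (opnorm d A) (vnorm d (q 0))
               (vnorm d (\<lambda>j. complex_of_real (\<omega> j) * q 0 j)) (vnorm d (qd 0)))"
  apply (rule exI[of _ Cb])
  apply (intro allI impI)
  apply (elim conjE)
  apply (rule main)
  apply assumption+
  done

end
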